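(* Let $n=2d$ be even, let $G=D_{2n}=\langle z,y\mid z^{2n}=y^2=1,\ yzy=z^{-1}\rangle$ and $H=\langle z^2,y\rangle\cong D_n$ (an index 2 subgroup). Then for none of the cover types I, II, III-a, III-b does there exist an admissible homomorphism $f:T(m_1,\dots,m_r)\to G$.
   Context: For integers $m_1,\dots,m_r\ge 2$, $T(m_1,\dots,m_r):=\langle\gamma_1,\dots,\gamma_r\mid \gamma_1\cdots\gamma_r=1,\ \gamma_i^{m_i}=1\rangle$. Let $H\subset G$ have index 2 and let $f_H:=\pi_H\circ f$, where $\pi_H:G\to G/H\cong\mathbb Z/2$ is the quotient map. A homomorphism $f:T(m_1,\dots,m_r)\to G$ is admissible for a given cover type if $f$ is surjective, $f(\gamma_i)$ has order exactly $m_i$, and the branching data are as follows: Cover type I: $r=6$, $(m_i)=(2,2,2,2,2,2)$, and $f_H(\gamma_i)\neq 0$ for all $i$. Cover type II: $r=5$, $(m_i)=(2,2,2,2,c_5)$, $f_H(\gamma_i)\ne 0$ for $i\le 4$ and $f_H(\gamma_5)=0$. Cover type III-a: $r=4$, $(m_i)=(2,2,2,2d_4)$ with $d_4>1$, and $f_H(\gamma_i)\neq0$ for all $i$. Cover type III-b: $r=4$, $(m_i)=(2,2,c_3,c_4)$ with $c_3\le c_4$, $c_4>2$, $f_H(\gamma_1),f_H(\gamma_2)\ne 0$ and $f_H(\gamma_3)=f_H(\gamma_4)=0$. *)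

theory Defs
  imports "HOL-Algebra.Algebra"
begin

text \<open>Concrete model of the dihedral group of order 2N with rotation subgroup of order N:
  the element (a, e) stands for z^a y^e, with 0 \<le> a < N.  Multiplication:
  z^a y^e * z^b y^f = z^(a + (-1)^e b) y^(e xor f).
  With N = 2n this is D_{2n} = < z, y | z^{2n} = y^2 = 1, yzy = z^{-1} >.\<close>
definition dihedral :: "nat \<Rightarrow> (int \<times> bool) monoid" where
  "dihedral N = \<lparr> carrier = {0..<int N} \<times> UNIV,
     monoid.mult = (\<lambda>(a, e) (b, f). ((a + (if e then - b else b)) mod int N, e \<noteq> f)),
     one = (0, False) \<rparr>"

definition dz :: "int \<times> bool" where "dz = (1, False)"
definition dy :: "int \<times> bool" where "dy = (0, True)"

definition list_prod :: "('a, 'b) monoid_scheme \<Rightarrow> 'a list \<Rightarrow> 'a" where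
  "list_prod G gs = foldr (\<lambda>g acc. g \<otimes>\<^bsub>G\<^esub> acc) gs \<one>\<^bsub>G\<^esub>"

text \<open>A homomorphism f : T(m_1,...,m_r) \<rightarrow> G is the same thing (universal property of the
  presentation) as the tuple gs = (f(\<gamma>_1),...,f(\<gamma>_r)) of elements of G with
  g_1 \<cdots> g_r = 1 and g_i^{m_i} = 1.  Such f is admissible (apart from branching data) iff
  it is surjective, i.e. the g_i generate G, and each g_i has order exactly m_i.\<close>
definition T_hom :: "('a, 'b) monoid_scheme \<Rightarrow> nat list \<Rightarrow> 'a list \<Rightarrow> bool" where
  "T_hom G ms gs \<longleftrightarrow> length gs = length ms \<and> set gs \<subseteq> carrier G
     \<and> list_prod G gs = \<one>\<^bsub>G\<^esub>
     \<and> (\<forall>i < length ms. gs ! i [^]\<^bsub>G\<^esub> (ms ! i) = \<one>\<^bsub>G\<^esub>)"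

definition admissible_base :: "('a, 'b) monoid_scheme \<Rightarrow> nat list \<Rightarrow> 'a list \<Rightarrow> bool" where
  "admissible_base G ms gs \<longleftrightarrow> (\<forall>m \<in> set ms. m \<ge> 2) \<and> T_hom G ms gs
     \<and> generate G (set gs) = carrier G
     \<and> (\<forall>i < length ms. group.ord G (gs ! i) = ms ! i)"

text \<open>f_H(\<gamma>_i) \<noteq> 0 iff f(\<gamma>_i) \<notin> H.\<close>
definition admissible_I :: "('a, 'b) monoid_scheme \<Rightarrow> 'a set \<Rightarrow> 'a list \<Rightarrow> bool" where
  "admissible_I G H gs \<longleftrightarrow> admissible_base G [2,2,2,2,2,2] gs
     \<and> (\<forall>i < 6. gs ! i \<notin> H)"

definition admissible_II :: "('a, 'b) monoid_scheme \<Rightarrow> 'a set \<Rightarrow> 'a list \<Rightarrow> bool" where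
  "admissible_II G H gs \<longleftrightarrow> (\<exists>c5. admissible_base G [2,2,2,2,c5] gs
     \<and> (\<forall>i < 4. gs ! i \<notin> H) \<and> gs ! 4 \<in> H)"

definition admissible_IIIa :: "('a, 'b) monoid_scheme \<Rightarrow> 'a set \<Rightarrow> 'a list \<Rightarrow> bool" where
  "admissible_IIIa G H gs \<longleftrightarrow> (\<exists>d4. d4 > 1 \<and> admissible_base G [2,2,2,2*d4] gs
     \<and> (\<forall>i < 4. gs ! i \<notin> H))"

definition admissible_IIIb :: "('a, 'b) monoid_scheme \<Rightarrow> 'a set \<Rightarrow> 'a list \<Rightarrow> bool" where
  "admissible_IIIb G H gs \<longleftrightarrow> (\<exists>c3 c4. c3 \<le> c4 \<and> c4 > 2 \<and> admissible_base G [2,2,c3,c4] gs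
     \<and> gs ! 0 \<notin> H \<and> gs ! 1 \<notin> H \<and> gs ! 2 \<in> H \<and> gs ! 3 \<in> H)"

end

theory Submission imports Defs begin

lemma dih_carrier: "carrier (dihedral N) = {0..<int N} \<times> UNIV"
  by (simp add: dihedral_def)
lemma dih_mult: "(a,e) \<otimes>\<^bsub>dihedral N\<^esub> (b,f) = ((a + (if e then - b else b)) mod int N, e \<noteq> f)"
  by (simp add: dihedral_def)
lemma dih_one: "\<one>\<^bsub>dihedral N\<^esub> = (0, False)"
  by (simp add: dihedral_def)

lemma dih_group: assumes "N > 0" shows "group (dihedral N)"
proof (rule groupI)
  fix x y assume "x \<in> carrier (dihedral N)" "y \<in> carrier (dihedral N)"
  then show "x \<otimes>\<^bsub>dihedral N\<^esub> y \<in> carrier (dihedral N)" using assms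
    by (cases x, cases y) (simp add: dih_carrier dih_mult)
next
  show "\<one>\<^bsub>dihedral N\<^esub> \<in> carrier (dihedral N)" using assms by (simp add: dih_carrier dih_one)
next
  fix x y z assume "x \<in> carrier (dihedral N)" "y \<in> carrier (dihedral N)" "z \<in> carrier (dihedral N)"
  then show "x \<otimes>\<^bsub>dihedral N\<^esub> y \<otimes>\<^bsub>dihedral N\<^esub> z = x \<otimes>\<^bsub>dihedral N\<^esub> (y \<otimes>\<^bsub>dihedral N\<^esub> z)"
    by (cases x, cases y, cases z) (auto simp add: dih_mult mod_simps algebra_simps)
next
  fix x assume "x \<in> carrier (dihedral N)"
  then show "\<one>\<^bsub>dihedral N\<^esub> \<otimes>\<^bsub>dihedral N\<^esub> x = x"
    by (cases x) (simp add: dih_one dih_mult dih_carrier)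
next
  fix x assume x: "x \<in> carrier (dihedral N)"
  obtain a e where xe: "x = (a,e)" by (cases x)
  show "\<exists>y\<in>carrier (dihedral N). y \<otimes>\<^bsub>dihedral N\<^esub> x = \<one>\<^bsub>dihedral N\<^esub>"
  proof (cases e)
    case True
    then show ?thesis using x xe by (intro bexI[of _ x]) (auto simp: dih_mult dih_one)
  next
    case False
    then show ?thesis using x xe assms
      by (intro bexI[of _ "((- a) mod int N, False)"]) (auto simp: dih_mult dih_one dih_carrier mod_simps)
  qed
qed

lemma char_kernel_subgroup:
  fixes G (structure)
  assumes "group G"
    and hom: "\<And>x y. x \<in> carrier G \<Longrightarrow> y \<in> carrier G \<Longrightarrow> chi (x \<otimes>\<^bsub>G\<^esub> y) = (chi x \<noteq> chi y)"
    and one: "\<not> chi \<one>\<^bsub>G\<^esub>"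
  shows "subgroup {x \<in> carrier G. \<not> chi x} G"
proof -
  interpret group G by fact
  show ?thesis
  proof (rule subgroupI)
    show "{x \<in> carrier G. \<not> chi x} \<noteq> {}" using one by auto
  next
    fix a assume a: "a \<in> {x \<in> carrier G. \<not> chi x}"
    have "chi (a \<otimes> inv a) = (chi a \<noteq> chi (inv a))" using a by (intro hom) auto
    then have "chi \<one> = (chi a \<noteq> chi (inv a))" using a by simp
    then show "inv a \<in> {x \<in> carrier G. \<not> chi x}" using a one by auto
  next
    fix a b assume "a \<in> {x \<in> carrier G. \<not> chi x}" "b \<in> {x \<in> carrier G. \<not> chi x}"
    then show "a \<otimes> b \<in> {x \<in> carrier G. \<not> chi x}" using hom by auto
  qed auto
qed

lemma char_list_prod:
  assumes "group G"
    and hom: "\<And>x y. x \<in> carrier G \<Longrightarrow> y \<in> carrier G \<Longrightarrow> chi (x \<otimes>\<^bsub>G\<^esub> y) = (chi x \<noteq> chi y)"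
    and one: "\<not> chi \<one>\<^bsub>G\<^esub>"
  shows "set gs \<subseteq> carrier G \<Longrightarrow> chi (list_prod G gs) = foldr (\<lambda>g acc. chi g \<noteq> acc) gs False"
proof (induction gs)
  case Nil
  then show ?case using one by (simp add: list_prod_def)
next
  case (Cons g gs)
  have "list_prod G gs \<in> carrier G"
    using Cons.prems unfolding list_prod_def
    by (induction gs) (auto intro: monoid.m_closed[OF group.is_monoid[OF assms(1)]] simp: group.is_monoid[OF assms(1)])
  then show ?case using Cons hom by (simp add: list_prod_def)
qed

definition phi :: "int \<times> bool \<Rightarrow> bool" where "phi x = (odd (fst x) \<noteq> snd x)"
definition psi :: "int \<times> bool \<Rightarrow> bool" where "psi x = odd (fst x)"

lemma odd_mod_even: "even (N::int) \<Longrightarrow> odd (a mod N) = odd a"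
  by (simp add: dvd_mod_iff)

lemma phi_hom: "even N \<Longrightarrow> phi ((a,e) \<otimes>\<^bsub>dihedral N\<^esub> (b,f)) = (phi (a,e) \<noteq> phi (b,f))"
  by (auto simp: phi_def dih_mult odd_mod_even)

lemma psi_hom: "even N \<Longrightarrow> psi ((a,e) \<otimes>\<^bsub>dihedral N\<^esub> (b,f)) = (psi (a,e) \<noteq> psi (b,f))"
  by (auto simp: psi_def dih_mult odd_mod_even)

lemma dz_pow: "dz [^]\<^bsub>dihedral N\<^esub> (k::nat) = (int k mod int N, False)"
  by (induction k) (auto simp: dz_def dih_one dih_mult mod_simps add.commute)

lemma len4: "length gs = 4 \<Longrightarrow> \<exists>a b c e. gs = [a,b,c,e]"
  by (auto simp: length_Suc_conv numeral_eq_Suc)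
lemma len5: "length gs = 5 \<Longrightarrow> \<exists>a b c e f. gs = [a,b,c,e,f]"
  by (auto simp: length_Suc_conv numeral_eq_Suc)
lemma len6: "length gs = 6 \<Longrightarrow> \<exists>a b c e f g. gs = [a,b,c,e,f,g]"
  by (auto simp: length_Suc_conv numeral_eq_Suc)

lemma even_sq: "(4 * int d) dvd (a + a) \<Longrightarrow> even (a::int)"
proof -
  assume "(4 * int d) dvd (a + a)"
  then obtain q where "a + a = 4 * int d * q" by (metis dvd_def)
  then have "a = 2 * (int d * q)" by simp
  then show ?thesis by simp
qed


theorem lemma5p7:
  fixes n d :: nat
  assumes "d \<ge> 1" and "n = 2 * d"
  defines "G \<equiv> dihedral (2 * n)"
  defines "H \<equiv> generate G {dz [^]\<^bsub>G\<^esub> (2::nat), dy}"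
  shows "(\<nexists>gs. admissible_I G H gs) \<and> (\<nexists>gs. admissible_II G H gs)
       \<and> (\<nexists>gs. admissible_IIIa G H gs) \<and> (\<nexists>gs. admissible_IIIb G H gs)"
proof -
  define N where "N = 2 * n"
  have Nd: "int N = 4 * int d" using assms(2) N_def by simp
  have GN: "G = dihedral N" using G_def N_def by simp
  have Npos: "N > 0" using Nd assms(1) by simp
  have evN: "even N" using N_def by simp
  interpret grp: group G using GN dih_group Npos by simp
  have car: "carrier G = {0..<int N} \<times> UNIV" using GN dih_carrier by simp
  have mul: "\<And>a e b f. (a,e) \<otimes>\<^bsub>G\<^esub> (b,f) = ((a + (if e then - b else b)) mod int N, e \<noteq> f)"
    using GN dih_mult by simp
  have one: "\<one>\<^bsub>G\<^esub> = (0, False)" using GN dih_one by simp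
  have phih: "\<And>x y. x \<in> carrier G \<Longrightarrow> y \<in> carrier G \<Longrightarrow> phi (x \<otimes>\<^bsub>G\<^esub> y) = (phi x \<noteq> phi y)"
    using phi_hom[OF evN] GN by (metis surj_pair)
  have psih: "\<And>x y. x \<in> carrier G \<Longrightarrow> y \<in> carrier G \<Longrightarrow> psi (x \<otimes>\<^bsub>G\<^esub> y) = (psi x \<noteq> psi y)"
    using psi_hom[OF evN] GN by (metis surj_pair)
  have phi1: "\<not> phi \<one>\<^bsub>G\<^esub>" using one by (simp add: phi_def)
  have psi1: "\<not> psi \<one>\<^bsub>G\<^esub>" using one by (simp add: psi_def)
  have Ksub: "subgroup {x \<in> carrier G. \<not> phi x} G"
    by (rule char_kernel_subgroup[OF grp.is_group phih phi1])
  have Esub: "subgroup {x \<in> carrier G. \<not> psi x} G"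
    by (rule char_kernel_subgroup[OF grp.is_group psih psi1])
  have dz2: "dz [^]\<^bsub>G\<^esub> (2::nat) = (2, False)"
    using GN dz_pow[of N 2] Nd assms(1) by simp
  have dyc: "dy \<in> carrier G" using car Npos by (simp add: dy_def)
  have dzc: "dz \<in> carrier G" using car Npos Nd assms(1) by (simp add: dz_def)
  have HE: "H \<subseteq> {x \<in> carrier G. \<not> psi x}"
    unfolding H_def
    by (rule grp.generate_subgroup_incl[OF _ Esub])
      (use dz2 dyc car Nd assms(1) in \<open>auto simp: psi_def dy_def\<close>)
  have EH: "x \<in> H" if x: "x \<in> carrier G" "\<not> psi x" for x
  proof -
    obtain a e where xe: "x = (a,e)" by (cases x)
    have a: "0 \<le> a" "a < int N" "even a" using x xe car by (auto simp: psi_def)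
    define k where "k = nat (a div 2)"
    have ak: "a = int (2 * k)" using a k_def by simp
    have pk: "(dz [^]\<^bsub>G\<^esub> (2::nat)) [^]\<^bsub>G\<^esub> j \<in> H" for j :: nat
    proof (induction j)
      case 0
      then show ?case unfolding H_def using generate.one by simp
    next
      case (Suc j)
      then show ?case unfolding H_def nat_pow_Suc by (rule generate.eng) (simp add: generate.incl)
    qed
    have "(dz [^]\<^bsub>G\<^esub> (2::nat)) [^]\<^bsub>G\<^esub> k = (a, False)"
      using grp.nat_pow_pow[OF dzc] GN dz_pow[of N "2*k"] ak a by simp
    then have aF: "(a, False) \<in> H" using pk by metis
    show ?thesis
    proof (cases e)
      case False
      then show ?thesis using aF xe by simp
    next
      case True
      have "(a, False) \<otimes>\<^bsub>G\<^esub> dy = x" using xe True a by (simp add: mul dy_def)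
      moreover have "dy \<in> H" unfolding H_def by (simp add: generate.incl)
      ultimately show ?thesis using aF unfolding H_def by (metis generate.eng)
    qed
  qed
  have sq: "x [^]\<^bsub>G\<^esub> (2::nat) = x \<otimes>\<^bsub>G\<^esub> x" if "x \<in> carrier G" for x
    using that by (simp add: numeral_2_eq_2)
  have inK: "\<not> phi x" if x: "x \<in> carrier G" "x \<notin> H" "x [^]\<^bsub>G\<^esub> (2::nat) = \<one>\<^bsub>G\<^esub>" for x
  proof -
    obtain a e where xe: "x = (a,e)" by (cases x)
    have oa: "odd a" using EH x xe by (auto simp: psi_def)
    have "x \<otimes>\<^bsub>G\<^esub> x = (0, False)" using sq x one by simp
    then have "4 * int d dvd a + (if e then - a else a)" using xe Nd by (auto simp: mul)
    then have "e" using oa even_sq[of d a] by (cases e) auto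
    then show ?thesis using oa xe by (simp add: phi_def)
  qed
  have notgen: "generate G (set gs) \<noteq> carrier G" if "set gs \<subseteq> {x \<in> carrier G. \<not> phi x}" for gs
  proof
    assume "generate G (set gs) = carrier G"
    moreover have "generate G (set gs) \<subseteq> {x \<in> carrier G. \<not> phi x}"
      by (rule grp.generate_subgroup_incl[OF that Ksub])
    ultimately show False using dyc by (auto simp: phi_def dy_def)
  qed
  have prod: "\<not> foldr (\<lambda>g acc. phi g \<noteq> acc) gs False"
    if "set gs \<subseteq> carrier G" "list_prod G gs = \<one>\<^bsub>G\<^esub>" for gs
    using char_list_prod[OF grp.is_group phih phi1 that(1)] that(2) phi1 by simp
  have reflsq: "x \<otimes>\<^bsub>G\<^esub> x = \<one>\<^bsub>G\<^esub>" if "x \<in> carrier G" "snd x" for x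
    using that by (cases x) (simp add: mul one)
  have I: "\<nexists>gs. admissible_I G H gs"
  proof
    assume "\<exists>gs. admissible_I G H gs"
    then obtain gs where A: "admissible_I G H gs" by blast
    then have T: "T_hom G [2,2,2,2,2,2] gs" and gen: "generate G (set gs) = carrier G"
      and nH: "\<forall>i<6. gs ! i \<notin> H"
      by (auto simp: admissible_I_def admissible_base_def)
    have "length gs = 6" using T by (simp add: T_hom_def)
    then obtain g0 g1 g2 g3 g4 g5 where gs: "gs = [g0,g1,g2,g3,g4,g5]" using len6 by blast
    have c: "set gs \<subseteq> carrier G" and pw: "\<forall>i<6. gs ! i [^]\<^bsub>G\<^esub> ([2,2,2,2,2,2::nat] ! i) = \<one>\<^bsub>G\<^esub>"
      using T by (auto simp: T_hom_def)
    have "set gs \<subseteq> {x \<in> carrier G. \<not> phi x}"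
      using c pw nH inK unfolding gs by (auto simp: numeral_eq_Suc All_less_Suc)
    then show False using notgen gen by blast
  qed
  have II: "\<nexists>gs. admissible_II G H gs"
  proof
    assume "\<exists>gs. admissible_II G H gs"
    then obtain gs c5 where T: "T_hom G [2,2,2,2,c5] gs" and gen: "generate G (set gs) = carrier G"
      and nH: "\<forall>i<4. gs ! i \<notin> H"
      by (auto simp: admissible_II_def admissible_base_def)
    have "length gs = 5" using T by (simp add: T_hom_def)
    then obtain g0 g1 g2 g3 g4 where gs: "gs = [g0,g1,g2,g3,g4]" using len5 by blast
    have c: "set gs \<subseteq> carrier G" and pw: "\<forall>i<5. gs ! i [^]\<^bsub>G\<^esub> ([2,2,2,2,c5] ! i) = \<one>\<^bsub>G\<^esub>"
      and lp: "list_prod G gs = \<one>\<^bsub>G\<^esub>"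
      using T by (auto simp: T_hom_def)
    have k: "\<not> phi g0" "\<not> phi g1" "\<not> phi g2" "\<not> phi g3"
      using c pw nH inK unfolding gs by (auto simp: numeral_eq_Suc All_less_Suc)
    have "\<not> phi g4" using prod[OF c lp] k unfolding gs by auto
    then have "set gs \<subseteq> {x \<in> carrier G. \<not> phi x}"
      using c k unfolding gs by auto
    then show False using notgen gen by blast
  qed
  have IIIa: "\<nexists>gs. admissible_IIIa G H gs"
  proof
    assume "\<exists>gs. admissible_IIIa G H gs"
    then obtain gs d4 where T: "T_hom G [2,2,2,2*d4] gs" and gen: "generate G (set gs) = carrier G"
      and nH: "\<forall>i<4. gs ! i \<notin> H"
      by (auto simp: admissible_IIIa_def admissible_base_def)
    have "length gs = 4" using T by (simp add: T_hom_def)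
    then obtain g0 g1 g2 g3 where gs: "gs = [g0,g1,g2,g3]" using len4 by blast
    have c: "set gs \<subseteq> carrier G" and pw: "\<forall>i<4. gs ! i [^]\<^bsub>G\<^esub> ([2,2,2,2*d4] ! i) = \<one>\<^bsub>G\<^esub>"
      and lp: "list_prod G gs = \<one>\<^bsub>G\<^esub>"
      using T by (auto simp: T_hom_def)
    have k: "\<not> phi g0" "\<not> phi g1" "\<not> phi g2"
      using c pw nH inK unfolding gs by (auto simp: numeral_eq_Suc All_less_Suc)
    have "\<not> phi g3" using prod[OF c lp] k unfolding gs by auto
    then have "set gs \<subseteq> {x \<in> carrier G. \<not> phi x}"
      using c k unfolding gs by auto
    then show False using notgen gen by blast
  qed
  have IIIb: "\<nexists>gs. admissible_IIIb G H gs"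
  proof
    assume "\<exists>gs. admissible_IIIb G H gs"
    then obtain gs c3 c4 where T: "T_hom G [2,2,c3,c4] gs" and gen: "generate G (set gs) = carrier G"
      and nH: "gs ! 0 \<notin> H" "gs ! 1 \<notin> H" and inH: "gs ! 2 \<in> H" "gs ! 3 \<in> H"
      and c4: "c4 > 2" and ord: "\<forall>i<4. grp.ord (gs ! i) = [2,2,c3,c4] ! i"
      by (auto simp: admissible_IIIb_def admissible_base_def)
    have "length gs = 4" using T by (simp add: T_hom_def)
    then obtain g0 g1 g2 g3 where gs: "gs = [g0,g1,g2,g3]" using len4 by blast
    have c: "set gs \<subseteq> carrier G" and pw: "\<forall>i<4. gs ! i [^]\<^bsub>G\<^esub> ([2,2,c3,c4] ! i) = \<one>\<^bsub>G\<^esub>"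
      and lp: "list_prod G gs = \<one>\<^bsub>G\<^esub>"
      using T by (auto simp: T_hom_def)
    have k: "\<not> phi g0" "\<not> phi g1"
      using c pw nH inK unfolding gs by (auto simp: numeral_eq_Suc All_less_Suc)
    have g3c: "g3 \<in> carrier G" using c gs by simp
    have o3: "grp.ord g3 = c4" using ord gs by (simp add: numeral_eq_Suc All_less_Suc)
    have p3: "\<not> psi g3" using inH HE gs by auto
    have ns3: "\<not> snd g3"
    proof
      assume "snd g3"
      then have "g3 [^]\<^bsub>G\<^esub> (2::nat) = \<one>\<^bsub>G\<^esub>" using reflsq[OF g3c] sq[OF g3c] by simp
      then have "grp.ord g3 dvd 2" using grp.pow_eq_id[OF g3c] by simp
      then have "grp.ord g3 \<le> 2" by (simp add: dvd_imp_le)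
      then show False using o3 c4 by simp
    qed
    have k3: "\<not> phi g3" using p3 ns3 by (simp add: phi_def psi_def)
    have "\<not> phi g2" using prod[OF c lp] k k3 unfolding gs by auto
    then have "set gs \<subseteq> {x \<in> carrier G. \<not> phi x}"
      using c k k3 unfolding gs by auto
    then show False using notgen gen by blast
  qed
  show ?thesis using I II IIIa IIIb by blast
qed

end
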